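(* For every $k\in\mathbb{N}$ there exists a 2-coloring of the edges of $K_\mathbb{N}$ such that every set $X\subseteq\mathbb{N}$ which is $k$-wise self-intersecting in some color has upper density at most $1/(2k)$.
   Context: For a 2-coloring of $K_\mathbb{N}$ (vertex set $\mathbb{N}$) and a color $i$, let $N_i(v)$ be the set of vertices joined to $v$ by an edge of color $i$, and for finite nonempty $S$ let $N_i^\cap(S)=\bigcap_{v\in S}N_i(v)$. A set $X\subseteq\mathbb{N}$ is $k$-wise self-intersecting in color $i$ if for every nonempty $S\subseteq X$ with $|S|\le k$, the set $X\cap N_i^\cap(S)$ is infinite. Upper density: $\overline{d}(X)=\limsup_{t\to\infty}|X\cap\{1,\dots,t\}|/t$. *)

theory Defs
  imports Complex_Main "HOL-Library.Liminf_Limsup" "HOL-Library.Extended_Real"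
begin

text \<open>A 2-colouring of the edges of the complete graph on \<nat> is a symmetric
  function c :: nat \<Rightarrow> nat \<Rightarrow> bool; the colour of edge {u,v} (u \<noteq> v) is c u v.
  Values on the diagonal are irrelevant.\<close>

definition two_coloring :: "(nat \<Rightarrow> nat \<Rightarrow> bool) \<Rightarrow> bool" where
  "two_coloring c \<longleftrightarrow> (\<forall>u v. c u v = c v u)"

definition nbhd :: "(nat \<Rightarrow> nat \<Rightarrow> bool) \<Rightarrow> bool \<Rightarrow> nat \<Rightarrow> nat set" where
  "nbhd c i v = {u. u \<noteq> v \<and> c v u = i}"

definition common_nbhd :: "(nat \<Rightarrow> nat \<Rightarrow> bool) \<Rightarrow> bool \<Rightarrow> nat set \<Rightarrow> nat set" where
  "common_nbhd c i S = (\<Inter>v\<in>S. nbhd c i v)"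

definition kwise_self_intersecting ::
  "(nat \<Rightarrow> nat \<Rightarrow> bool) \<Rightarrow> bool \<Rightarrow> nat \<Rightarrow> nat set \<Rightarrow> bool" where
  "kwise_self_intersecting c i k X \<longleftrightarrow>
     (\<forall>S. S \<subseteq> X \<and> S \<noteq> {} \<and> finite S \<and> card S \<le> k \<longrightarrow> infinite (X \<inter> common_nbhd c i S))"

definition upper_density :: "nat set \<Rightarrow> ereal" where
  "upper_density X = limsup (\<lambda>t. ereal (real (card (X \<inter> {1..t})) / real t))"

end

theory Submission
  imports Defs
begin

definition col :: "nat \<Rightarrow> nat \<Rightarrow> nat \<Rightarrow> bool" where
  "col k u v = ((min u v mod (2*k) = max u v mod (2*k)) = (max u v mod (2*k) < k))"

lemma col_lt: "s < x \<Longrightarrow> col k s x = ((s mod (2*k) = x mod (2*k)) = (x mod (2*k) < k))"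
  unfolding col_def by (simp add: min_def max_def)

lemma not_kwise:
  assumes "S \<subseteq> X" "S \<noteq> {}" "finite S" "card S \<le> k"
    and H: "\<And>x. x \<in> X \<Longrightarrow> (\<forall>s\<in>S. s < x) \<Longrightarrow> \<exists>s\<in>S. c s x \<noteq> i"
  shows "\<not> kwise_self_intersecting c i k X"
proof
  assume K: "kwise_self_intersecting c i k X"
  have "X \<inter> common_nbhd c i S \<subseteq> {..Max S}"
  proof
    fix x assume x: "x \<in> X \<inter> common_nbhd c i S"
    show "x \<in> {..Max S}"
    proof (rule ccontr)
      assume "x \<notin> {..Max S}"
      hence "\<forall>s\<in>S. s < x" using assms(3) by (meson Max_ge atMost_iff le_less_trans not_le)
      then obtain s where "s \<in> S" "c s x \<noteq> i" using H x by blast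
      moreover have "x \<in> nbhd c i s" using x \<open>s \<in> S\<close> unfolding common_nbhd_def by blast
      ultimately show False unfolding nbhd_def by simp
    qed
  qed
  hence "finite (X \<inter> common_nbhd c i S)" using finite_subset by blast
  thus False using K assms(1-4) unfolding kwise_self_intersecting_def by blast
qed

lemma one_class:
  assumes k: "k \<ge> 1" and K: "kwise_self_intersecting (col k) i k X"
  shows "\<exists>r. \<forall>x\<in>X. x mod (2*k) = r"
proof (rule ccontr)
  define m where "m = 2*k"
  assume "\<not> (\<exists>r. \<forall>x\<in>X. x mod (2*k) = r)"
  then obtain x1 x2 where x12: "x1 \<in> X" "x2 \<in> X" "x1 mod m \<noteq> x2 mod m"
    unfolding m_def by metis
  have mpos: "m > 0" using k m_def by simp
  show False
  proof (cases "\<exists>y\<in>X. (y mod m < k) \<noteq> i")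
    case True
    then obtain y where y: "y \<in> X" "(y mod m < k) \<noteq> i" by blast
    define R where "R = {r. r < m \<and> (r < k) \<noteq> i \<and> (\<exists>u\<in>X. u mod m = r)}"
    define rep where "rep r = (SOME u. u \<in> X \<and> u mod m = r)" for r
    have rep: "rep r \<in> X \<and> rep r mod m = r" if "r \<in> R" for r
      using that unfolding R_def rep_def by (smt (verit) mem_Collect_eq someI_ex)
    define S where "S = rep ` R"
    have RB: "R \<subseteq> {r. r < m \<and> (r < k) \<noteq> i}" unfolding R_def by blast
    have cardB: "card {r. r < m \<and> (r < k) \<noteq> i} = k"
    proof (cases i)
      case True
      hence "{r. r < m \<and> (r < k) \<noteq> i} = {k..<2*k}" unfolding m_def by auto
      thus ?thesis by simp
    next
      case False
      hence "{r. r < m \<and> (r < k) \<noteq> i} = {..<k}" unfolding m_def by auto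
      thus ?thesis by simp
    qed
    have finR: "finite R" using RB by (rule finite_subset) auto
    have "card R \<le> card {r. r < m \<and> (r < k) \<noteq> i}" by (rule card_mono[OF _ RB]) simp
    hence "card R \<le> k" using cardB by simp
    hence cS: "card S \<le> k" unfolding S_def using card_image_le[OF finR, of rep] by linarith
    have yR: "y mod m \<in> R" unfolding R_def using y mpos by auto
    have "\<not> kwise_self_intersecting (col k) i k X"
    proof (rule not_kwise[OF _ _ _ cS])
      show "S \<subseteq> X" unfolding S_def using rep by blast
      show "S \<noteq> {}" unfolding S_def using yR by blast
      show "finite S" unfolding S_def using finR by blast
      fix x assume x: "x \<in> X" and lt: "\<forall>s\<in>S. s < x"
      show "\<exists>s\<in>S. col k s x \<noteq> i"
      proof (cases "(x mod m < k) \<noteq> i")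
        case True
        hence xR: "x mod m \<in> R" unfolding R_def using x mpos by auto
        hence "rep (x mod m) \<in> S" unfolding S_def by blast
        moreover have "col k (rep (x mod m)) x \<noteq> i"
          using lt calculation rep[OF xR] True col_lt unfolding m_def by metis
        ultimately show ?thesis by blast
      next
        case False
        have "rep (y mod m) \<in> S" unfolding S_def using yR by blast
        moreover have "col k (rep (y mod m)) x \<noteq> i"
        proof -
          have "rep (y mod m) mod m \<noteq> x mod m" using rep[OF yR] False y(2) by auto
          thus ?thesis using lt calculation False col_lt unfolding m_def by metis
        qed
        ultimately show ?thesis by blast
      qed
    qed
    thus False using K by blast
  next
    case False
    hence a: "(x1 mod m < k) = i" "(x2 mod m < k) = i" using x12 by auto
    have k2: "k \<ge> 2"
    proof (rule ccontr)
      assume "\<not> k \<ge> 2"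
      hence "k = 1" using k by simp
      hence "x1 mod m < 2" "x2 mod m < 2" using mpos m_def by auto
      thus False using a x12(3) \<open>k = 1\<close> by auto
    qed
    have cS: "card {x1, x2} \<le> k" using k2 by (simp add: card_insert_if)
    have "\<not> kwise_self_intersecting (col k) i k X"
    proof (rule not_kwise[OF _ _ _ cS])
      show "{x1, x2} \<subseteq> X" using x12 by blast
      fix x assume x: "x \<in> X" and lt: "\<forall>s\<in>{x1,x2}. s < x"
      have xi: "(x mod m < k) = i" using False x by auto
      show "\<exists>s\<in>{x1,x2}. col k s x \<noteq> i"
      proof (cases "x1 mod m = x mod m")
        case True
        hence "x2 mod m \<noteq> x mod m" using x12 by simp
        hence "col k x2 x \<noteq> i" using lt xi col_lt unfolding m_def by auto
        thus ?thesis by blast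
      next
        case False
        hence "col k x1 x \<noteq> i" using lt xi col_lt unfolding m_def by auto
        thus ?thesis by blast
      qed
    qed auto
    thus False using K by blast
  qed
qed

lemma card_class:
  assumes "m > 0"
  shows "card {u \<in> {1..t}. u mod m = r} \<le> t div m + 1"
proof -
  have inj: "inj_on (\<lambda>u. u div m) {u \<in> {1..t}. u mod m = r}"
  proof (rule inj_onI)
    fix x y assume x: "x \<in> {u \<in> {1..t}. u mod m = r}" and y: "y \<in> {u \<in> {1..t}. u mod m = r}"
      and e: "x div m = y div m"
    have "x = x div m * m + x mod m" by simp
    also have "\<dots> = y div m * m + y mod m" using x y e by simp
    also have "\<dots> = y" by simp
    finally show "x = y" .
  qed
  have img: "(\<lambda>u. u div m) ` {u \<in> {1..t}. u mod m = r} \<subseteq> {0..t div m}"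
    by (auto intro: div_le_mono)
  have "card {u \<in> {1..t}. u mod m = r} \<le> card {0..t div m}"
    using card_inj_on_le[OF inj img] by simp
  thus ?thesis by simp
qed

lemma density_class:
  assumes k: "k \<ge> 1" and X: "\<forall>x\<in>X. x mod (2*k) = r"
  shows "upper_density X \<le> ereal (1 / (2 * real k))"
proof -
  define m where "m = 2*k"
  have mpos: "m > 0" using k m_def by simp
  have ev: "eventually (\<lambda>t. ereal (real (card (X \<inter> {1..t})) / real t)
              \<le> ereal (1 / real m + 1 / real t)) sequentially"
  proof (rule eventually_sequentiallyI[of 1])
    fix t :: nat assume t: "t \<ge> 1"
    have "X \<inter> {1..t} \<subseteq> {u \<in> {1..t}. u mod m = r}" using X m_def by auto
    hence "card (X \<inter> {1..t}) \<le> card {u \<in> {1..t}. u mod m = r}" by (intro card_mono) auto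
    also have "\<dots> \<le> t div m + 1" using card_class[OF mpos] .
    finally have "real (card (X \<inter> {1..t})) \<le> real (t div m) + 1" by linarith
    also have "real (t div m) \<le> real t / real m" by (rule of_nat_div_le_of_nat)
    finally have "real (card (X \<inter> {1..t})) \<le> real t / real m + 1" by simp
    hence "real (card (X \<inter> {1..t})) / real t \<le> (real t / real m + 1) / real t"
      using t by (intro divide_right_mono) auto
    also have "\<dots> = 1 / real m + 1 / real t" using t mpos by (simp add: field_simps)
    finally show "ereal (real (card (X \<inter> {1..t})) / real t) \<le> ereal (1 / real m + 1 / real t)"
      by simp
  qed
  have lim: "((\<lambda>t. ereal (1 / real m + 1 / real t)) \<longlongrightarrow> ereal (1 / real m)) sequentially"
  proof (intro tendsto_ereal)
    have "((\<lambda>t. 1 / real m + 1 / real t) \<longlongrightarrow> 1 / real m + 0) sequentially"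
      by (intro tendsto_intros lim_1_over_n)
    thus "((\<lambda>t. 1 / real m + 1 / real t) \<longlongrightarrow> 1 / real m) sequentially" by simp
  qed
  have "upper_density X \<le> limsup (\<lambda>t. ereal (1 / real m + 1 / real t))"
    unfolding upper_density_def by (rule Limsup_mono[OF ev])
  also have "\<dots> = ereal (1 / real m)" by (rule lim_imp_Limsup[OF _ lim]) simp
  finally show ?thesis unfolding m_def by simp
qed

theorem mainTheorem11:
  fixes k :: nat
  assumes "k \<ge> 1"
  shows "\<exists>c. two_coloring c \<and>
           (\<forall>i X. kwise_self_intersecting c i k X \<longrightarrow> upper_density X \<le> ereal (1 / (2 * real k)))"
proof (intro exI conjI allI impI)
  show "two_coloring (col k)" unfolding two_coloring_def col_def by (simp add: min.commute max.commute)
  fix i X assume "kwise_self_intersecting (col k) i k X"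
  then obtain r where "\<forall>x\<in>X. x mod (2*k) = r" using one_class assms by blast
  thus "upper_density X \<le> ereal (1 / (2 * real k))" using density_class assms by blast
qed

end
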